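(* Let $P\subset\mathbb{R}^2$ be a smooth domain, $a>0$, $h>0$ with $ah\le1/3$, and $F:P\times\{0,h\}\times[0,\infty)\to\mathbb{R}$ bounded. Then for every $x\in P$, $x_3\in[0,h]$ and $t>0$, $$\left|\int_0^t\int_{P\times\{0,h\}}W(x,t,y,s)P_1(x_3,t,y_3,s)F(y,y_3,s)\,dS_y\,ds-\int_0^t\int_{P\times\{0,h\}}2e^{-\alpha_1^2(t-s)}\frac{\alpha_1^2}{4a}W(x,t,y,s)F(y,y_3,s)\,dS_y\,ds\right|\le5h\|F\|_{L^\infty([0,t])}.$$
   Context: $\alpha_1$ is the smallest positive solution $q$ of $\tan(hq)=\frac{2aq}{q^2-a^2}$, and for $z,w\in[0,h]$, $t>s$, $$P_1(z,t,w,s)=\frac{2e^{-\alpha_1^2(t-s)}[\alpha_1\cos(\alpha_1 z)+a\sin(\alpha_1 z)][\alpha_1\cos(\alpha_1 w)+a\sin(\alpha_1 w)]}{2a+h(a^2+\alpha_1^2)}.$$ $W(x,t,y,s)$ ($x,y\in P$, $t>s$) is the Green's function of the heat equation on $P$ with homogeneous Neumann boundary condition (the kernel such that $u(x,t)=\int_P W(x,t,y,0)g(y)\,dy$ solves $\partial_tu-\Delta u=0$ in $P$, $u(\cdot,0)=g$, $\partial u/\partial\nu=0$ on $\partial P$). $\int_{P\times\{0,h\}}f(y,y_3)\,dS_y:=\int_Pf(y,0)\,dy+\int_Pf(y,h)\,dy$, and $\|F\|_{L^\infty([0,t])}:=\sup_{(y,y_3,s)\in P\times\{0,h\}\times[0,t]}|F(y,y_3,s)|$.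 *)

theory Defs
  imports "HOL-Analysis.Analysis"
begin

text \<open>A function rho on R^2 is C-infinity: there is a family D of all iterated
  partial derivatives (indexed by lists of coordinate directions), each of which is
  everywhere (Frechet) differentiable with partial derivatives given by D again.\<close>
definition smooth_R2 :: "(real^2 \<Rightarrow> real) \<Rightarrow> bool" where
  "smooth_R2 f \<longleftrightarrow> (\<exists>D :: 2 list \<Rightarrow> real^2 \<Rightarrow> real.
      D [] = f \<and>
      (\<forall>js x. (D js has_derivative (\<lambda>v. \<Sum>i\<in>UNIV. v $ i * D (i # js) x)) (at x)))"

definition grad :: "(real^2 \<Rightarrow> real) \<Rightarrow> real^2 \<Rightarrow> real^2" where
  "grad f x = (\<chi> i. frechet_derivative f (at x) (axis i 1))"

definition smooth_domain :: "(real^2) set \<Rightarrow> (real^2 \<Rightarrow> real) \<Rightarrow> bool" where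
  "smooth_domain P \<rho> \<longleftrightarrow> P \<noteq> {} \<and> connected P \<and> bounded P \<and> smooth_R2 \<rho> \<and>
     P = {x. \<rho> x < 0} \<and> (\<forall>x. \<rho> x = 0 \<longrightarrow> grad \<rho> x \<noteq> 0)"

definition outer_normal :: "(real^2 \<Rightarrow> real) \<Rightarrow> real^2 \<Rightarrow> real^2" where
  "outer_normal \<rho> x = grad \<rho> x /\<^sub>R norm (grad \<rho> x)"

definition neumann_heat_solution ::
  "(real^2) set \<Rightarrow> (real^2 \<Rightarrow> real) \<Rightarrow> real \<Rightarrow> (real^2 \<Rightarrow> real) \<Rightarrow> (real^2 \<Rightarrow> real \<Rightarrow> real) \<Rightarrow> bool"
where
  "neumann_heat_solution P \<rho> s g u \<longleftrightarrow>
     continuous_on (closure P \<times> {s<..}) (\<lambda>(x,t). u x t) \<and>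
     (\<forall>x0\<in>closure P. ((\<lambda>(x,t). u x t) \<longlongrightarrow> g x0) (at (x0, s) within closure P \<times> {s<..})) \<and>
     (\<exists>(ut :: real^2 \<Rightarrow> real \<Rightarrow> real) (gr :: real^2 \<Rightarrow> real \<Rightarrow> real^2) (H :: real^2 \<Rightarrow> real \<Rightarrow> real^2^2).
        (\<forall>x\<in>P. \<forall>t>s.
           ((\<lambda>\<tau>. u x \<tau>) has_real_derivative ut x t) (at t) \<and>
           ((\<lambda>y. u y t) has_derivative (\<lambda>v. gr x t \<bullet> v)) (at x) \<and>
           ((\<lambda>y. gr y t) has_derivative (\<lambda>v. H x t *v v)) (at x) \<and>
           ut x t = (\<Sum>i\<in>UNIV. H x t $ i $ i)) \<and>
        continuous_on (P \<times> {s<..}) (\<lambda>(x,t). ut x t) \<and>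
        continuous_on (P \<times> {s<..}) (\<lambda>(x,t). H x t)) \<and>
     (\<forall>x\<in>frontier P. \<forall>t>s.
        ((\<lambda>r. (u (x - r *\<^sub>R outer_normal \<rho> x) t - u x t) / r) \<longlongrightarrow> 0) (at_right 0))"

definition neumann_heat_kernel ::
  "(real^2) set \<Rightarrow> (real^2 \<Rightarrow> real) \<Rightarrow> (real^2 \<Rightarrow> real \<Rightarrow> real^2 \<Rightarrow> real \<Rightarrow> real) \<Rightarrow> bool"
where
  "neumann_heat_kernel P \<rho> W \<longleftrightarrow>
     continuous_on {(x,t,y,s). x \<in> closure P \<and> y \<in> closure P \<and> s < t} (\<lambda>(x,t,y,s). W x t y s) \<and>
     (\<forall>s g. continuous_on (closure P) g \<longrightarrow>
        (\<forall>x\<in>closure P. \<forall>t>s. set_integrable lborel P (\<lambda>y. W x t y s * g y)) \<and>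
        neumann_heat_solution P \<rho> s g (\<lambda>x t. LINT y:P|lborel. W x t y s * g y))"

definition alpha1 :: "real \<Rightarrow> real \<Rightarrow> real" where
  "alpha1 a h = (THE q. q > 0 \<and> tan (h * q) = 2 * a * q / (q\<^sup>2 - a\<^sup>2) \<and>
      (\<forall>q'. q' > 0 \<and> tan (h * q') = 2 * a * q' / (q'\<^sup>2 - a\<^sup>2) \<longrightarrow> q \<le> q'))"

definition P1 :: "real \<Rightarrow> real \<Rightarrow> real \<Rightarrow> real \<Rightarrow> real \<Rightarrow> real \<Rightarrow> real" where
  "P1 a h z t w s =
     2 * exp (- (alpha1 a h)\<^sup>2 * (t - s))
       * (alpha1 a h * cos (alpha1 a h * z) + a * sin (alpha1 a h * z))
       * (alpha1 a h * cos (alpha1 a h * w) + a * sin (alpha1 a h * w))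
     / (2 * a + h * (a\<^sup>2 + (alpha1 a h)\<^sup>2))"

end

theory Submission
  imports Defs
begin

lemma arctan_le_self': assumes "0 \<le> (u::real)" shows "arctan u \<le> u"
proof -
  have "(\<lambda>x. x - arctan x) 0 \<le> (\<lambda>x. x - arctan x) u"
  proof (rule DERIV_nonneg_imp_increasing_open[OF assms])
    fix x :: real
    show "\<exists>y. DERIV (\<lambda>x. x - arctan x) x :> y \<and> 0 \<le> y"
    proof (intro exI conjI)
      show "DERIV (\<lambda>x. x - arctan x) x :> 1 - inverse (1 + x\<^sup>2)"
        by (auto intro!: derivative_eq_intros DERIV_arctan)
      have "inverse (1 + x\<^sup>2) \<le> 1" by (simp add: inverse_le_1_iff) 
      then show "0 \<le> 1 - inverse (1 + x\<^sup>2)" by simp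
    qed
  next
    show "continuous_on {0..u} (\<lambda>x. x - arctan x)"
      by (intro continuous_intros)
  qed
  then show ?thesis by simp
qed

lemma arctan_ge_cubic: assumes "0 \<le> (u::real)" shows "u - u^3/3 \<le> arctan u"
proof -
  have "(\<lambda>x. arctan x - x + x^3/3) 0 \<le> (\<lambda>x. arctan x - x + x^3/3) u"
  proof (rule DERIV_nonneg_imp_increasing_open[OF assms])
    fix x :: real
    show "\<exists>y. DERIV (\<lambda>x. arctan x - x + x^3/3) x :> y \<and> 0 \<le> y"
    proof (intro exI conjI)
      show "DERIV (\<lambda>x. arctan x - x + x^3/3) x :> inverse (1 + x\<^sup>2) - 1 + x\<^sup>2"
        by (auto intro!: derivative_eq_intros DERIV_arctan)
      have "inverse (1 + x\<^sup>2) - 1 + x\<^sup>2 = x^4 / (1 + x\<^sup>2)"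
      proof -
        have p: "1 + x\<^sup>2 \<noteq> 0" by (smt (verit) zero_le_power2)
        show ?thesis using p by (simp add: field_simps)
      qed
      also have "\<dots> \<ge> 0" by simp
      finally show "0 \<le> inverse (1 + x\<^sup>2) - 1 + x\<^sup>2" .
    qed
  next
    show "continuous_on {0..u} (\<lambda>x. arctan x - x + x^3/3)"
      by (intro continuous_intros) auto
  qed
  then show ?thesis by simp
qed

lemma tan_double_arctan:
  assumes "a > 0" "q > (a::real)"
  shows "tan (2 * arctan (a / q)) = 2 * a * q / (q\<^sup>2 - a\<^sup>2)"
    and "0 < arctan (a/q)" "arctan (a/q) < pi/4"
proof -
  have q0: "q > 0" using assms by simp
  have lt1: "a / q < 1" using assms by simp
  show b0: "0 < arctan (a/q)" using assms q0 by simp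
  have "arctan (a/q) < arctan 1" by (rule arctan_monotone[OF lt1])
  then show b1: "arctan (a/q) < pi/4" using arctan_one by linarith
  have "cos (2 * arctan (a/q)) > 0"
    using b0 b1 by (intro cos_gt_zero_pi) linarith+
  then have "tan (2 * arctan (a / q)) = 2 * tan (arctan (a/q)) / (1 - (tan (arctan (a/q)))\<^sup>2)"
    by (intro tan_double) auto
  also have "\<dots> = 2 * (a/q) / (1 - (a/q)\<^sup>2)" by (simp add: arctan)
  also have "\<dots> = 2 * a * q / (q\<^sup>2 - a\<^sup>2)"
    using q0 assms by (simp add: field_simps power2_eq_square)
  finally show "tan (2 * arctan (a / q)) = 2 * a * q / (q\<^sup>2 - a\<^sup>2)" .
qed

lemma alpha1_char:
  assumes a: "a > 0" and h: "h > 0" and ah: "a * h \<le> 1/3"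
  shows "alpha1 a h > a \<and> h * alpha1 a h = 2 * arctan (a / alpha1 a h)"
proof -
  define f where "f q = h * q - 2 * arctan (a / q)" for q
  have pih: "a \<le> pi / h"
  proof -
    have "a * h \<le> pi" using ah pi_gt3 by linarith
    then show ?thesis using h by (simp add: field_simps)
  qed
  have fa: "f a < 0" using ah pi_gt3 a by (simp add: f_def arctan_one algebra_simps)
  have "f (pi/h) = pi - 2 * arctan (a / (pi/h))" using h by (simp add: f_def)
  moreover have "arctan (a / (pi/h)) < pi/2" by (rule arctan_ubound)
  ultimately have fb: "f (pi/h) > 0" by simp
  have cont: "continuous_on {a..pi/h} f"
    unfolding f_def using a by (intro continuous_intros) auto
  obtain q0 where q0: "a \<le> q0" "q0 \<le> pi/h" "f q0 = 0"
    using IVT'[of f a 0 "pi/h", OF _ _ pih cont] fa fb by auto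
  have q0a: "q0 > a" using q0 fa by (cases "q0 = a") auto
  have eq0: "h * q0 = 2 * arctan (a / q0)" using q0 by (simp add: f_def)
  define S where "S q \<longleftrightarrow> q > 0 \<and> tan (h * q) = 2 * a * q / (q\<^sup>2 - a\<^sup>2)" for q
  have Sq0: "S q0" using tan_double_arctan(1)[OF a q0a] eq0 q0a a by (simp add: S_def)
  have minq0: "q0 \<le> q" if "S q" for q
  proof (rule ccontr)
    assume "\<not> q0 \<le> q"
    then have qq: "q < q0" by simp
    have q: "q > 0" "tan (h * q) = 2 * a * q / (q\<^sup>2 - a\<^sup>2)" using that by (auto simp: S_def)
    show False
    proof (cases "q \<le> a")
      case True
      have "h * q \<le> h * a" using True h by simp
      then have "h * q < pi/2" using ah pi_gt3 by (simp add: algebra_simps)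
      then have "tan (h * q) > 0" using q h by (intro tan_gt_zero) auto
      moreover have "2 * a * q / (q\<^sup>2 - a\<^sup>2) \<le> 0"
      proof -
        have "q\<^sup>2 \<le> a\<^sup>2" using True q by (simp add: power_mono)
        then show ?thesis using a q by (simp add: divide_nonneg_nonpos)
      qed
      ultimately show False using q by simp
    next
      case False
      then have qa: "q > a" by simp
      have "a / q0 < a / q" using qq q a by (simp add: frac_less2)
      then have "arctan (a/q0) < arctan (a/q)" by (simp add: arctan_less_iff)
      moreover have "h * q < h * q0" using qq h by simp
      ultimately have lt: "h * q < 2 * arctan (a/q)" using eq0 by linarith
      have "tan (h * q) < tan (2 * arctan (a/q))"
        using tan_double_arctan(2,3)[OF a qa] lt mult_pos_pos[OF h q(1)] pi_gt3
        by (intro tan_monotone) auto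
      then show False using tan_double_arctan(1)[OF a qa] q by simp
    qed
  qed
  have "alpha1 a h = q0"
    unfolding alpha1_def
  proof (rule the_equality)
    show "q0 > 0 \<and> tan (h * q0) = 2 * a * q0 / (q0\<^sup>2 - a\<^sup>2) \<and>
      (\<forall>q'. q' > 0 \<and> tan (h * q') = 2 * a * q' / (q'\<^sup>2 - a\<^sup>2) \<longrightarrow> q0 \<le> q')"
      using Sq0 minq0 by (auto simp: S_def)
  next
    fix q assume "q > 0 \<and> tan (h * q) = 2 * a * q / (q\<^sup>2 - a\<^sup>2) \<and>
      (\<forall>q'. q' > 0 \<and> tan (h * q') = 2 * a * q' / (q'\<^sup>2 - a\<^sup>2) \<longrightarrow> q \<le> q')"
    then have "S q" "q \<le> q0" using Sq0 by (auto simp: S_def)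
    then show "q = q0" using minq0 by force
  qed
  then show ?thesis using q0a eq0 by simp
qed


lemma phi_facts:
  assumes a: "a > 0" and al: "\<alpha> > a" and eq: "h * \<alpha> = 2 * arctan (a / \<alpha>)"
    and z: "0 \<le> z" "z \<le> h"
  shows "\<alpha> * cos (\<alpha> * h) + a * sin (\<alpha> * h) = \<alpha>"
    and "\<alpha> \<le> \<alpha> * cos (\<alpha> * z) + a * sin (\<alpha> * z)"
    and "\<alpha> * cos (\<alpha> * z) + a * sin (\<alpha> * z) \<le> \<alpha> + a\<^sup>2 / (2 * \<alpha>)"
proof -
  define \<beta> where "\<beta> = arctan (a / \<alpha>)"
  define R where "R = sqrt (\<alpha>\<^sup>2 + a\<^sup>2)"
  have al0: "\<alpha> > 0" using a al by simp
  have R0: "R > 0" using al0 by (simp add: R_def add_pos_nonneg)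
  have sq: "sqrt (1 + (a / \<alpha>)\<^sup>2) = R / \<alpha>"
  proof -
    have "1 + (a / \<alpha>)\<^sup>2 = (\<alpha>\<^sup>2 + a\<^sup>2) / \<alpha>\<^sup>2" using al0 by (simp add: field_simps)
    then have "sqrt (1 + (a / \<alpha>)\<^sup>2) = sqrt (\<alpha>\<^sup>2 + a\<^sup>2) / sqrt (\<alpha>\<^sup>2)" by (simp add: real_sqrt_divide)
    then show ?thesis using al0 by (simp add: R_def)
  qed
  have cb: "R * cos \<beta> = \<alpha>" unfolding \<beta>_def cos_arctan sq using R0 al0 by simp
  have sb: "R * sin \<beta> = a" unfolding \<beta>_def sin_arctan sq using R0 al0 by simp
  have rep: "\<alpha> * cos (\<alpha> * y) + a * sin (\<alpha> * y) = R * cos (\<alpha> * y - \<beta>)" for y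
  proof -
    have "R * cos (\<alpha>*y - \<beta>) = (R * cos \<beta>) * cos (\<alpha>*y) + (R * sin \<beta>) * sin (\<alpha>*y)"
      by (simp add: cos_diff algebra_simps)
    then show ?thesis using cb sb by simp
  qed
  have b0: "0 < \<beta>" "\<beta> < pi/4" using tan_double_arctan(2,3)[OF a al] by (auto simp: \<beta>_def)
  have hb: "\<alpha> * h = 2 * \<beta>" using eq by (simp add: \<beta>_def mult.commute)
  show "\<alpha> * cos (\<alpha> * h) + a * sin (\<alpha> * h) = \<alpha>"
    using rep[of h] hb cb by simp
  have "\<bar>\<alpha> * z - \<beta>\<bar> \<le> \<beta>"
  proof -
    have "\<alpha> * z \<le> \<alpha> * h" using z al0 by (simp add: mult_left_mono)
    moreover have "0 \<le> \<alpha> * z" using z al0 by simp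
    ultimately show ?thesis using hb by linarith
  qed
  then have "cos \<beta> \<le> cos \<bar>\<alpha> * z - \<beta>\<bar>"
    using b0 pi_gt3 by (intro cos_monotone_0_pi_le) auto
  then have "R * cos \<beta> \<le> R * cos (\<alpha> * z - \<beta>)" using R0 by simp
  then show "\<alpha> \<le> \<alpha> * cos (\<alpha> * z) + a * sin (\<alpha> * z)" unfolding rep cb .
  have "R * cos (\<alpha> * z - \<beta>) \<le> R" using R0 by simp
  also have "R \<le> \<alpha> + a\<^sup>2 / (2 * \<alpha>)"
  proof -
    have "\<alpha>\<^sup>2 + a\<^sup>2 \<le> (\<alpha> + a\<^sup>2 / (2 * \<alpha>))\<^sup>2"
      using al0 a by (simp add: power2_eq_square field_simps zero_le_mult_iff)
    then have "R \<le> sqrt ((\<alpha> + a\<^sup>2 / (2 * \<alpha>))\<^sup>2)" unfolding R_def by (rule real_sqrt_le_mono)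
    also have "\<dots> = \<alpha> + a\<^sup>2 / (2 * \<alpha>)" using al0 by simp
    finally show ?thesis .
  qed
  finally show "\<alpha> * cos (\<alpha> * z) + a * sin (\<alpha> * z) \<le> \<alpha> + a\<^sup>2 / (2 * \<alpha>)" unfolding rep .
qed

lemma X_bounds:
  assumes a: "a > 0" and al: "\<alpha> > a" and eq: "h * \<alpha> = 2 * arctan (a / \<alpha>)"
  shows "h * \<alpha>\<^sup>2 \<le> 2 * a" and "3 * \<alpha>\<^sup>2 * (2 * a - h * \<alpha>\<^sup>2) \<le> 2 * a^3"
proof -
  have al0: "\<alpha> > 0" using a al by simp
  have u0: "a / \<alpha> \<ge> 0" using a al0 by simp
  have "h * \<alpha> \<le> 2 * (a / \<alpha>)" using arctan_le_self'[OF u0] eq by simp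
  then have "h * \<alpha> * \<alpha> \<le> 2 * (a / \<alpha>) * \<alpha>" by (rule mult_right_mono) (use al0 in simp)
  also have "2 * (a / \<alpha>) * \<alpha> = 2 * a" using al0 by simp
  finally show "h * \<alpha>\<^sup>2 \<le> 2 * a" by (simp add: power2_eq_square)
  have "h * \<alpha> \<ge> 2 * (a / \<alpha> - (a/\<alpha>)^3/3)" using arctan_ge_cubic[OF u0] eq by simp
  define u where "u = a / \<alpha>"
  have au: "a = u * \<alpha>" using al0 by (simp add: u_def)
  have "3 * (2 * u - h * \<alpha>) \<le> 2 * u^3" using \<open>h * \<alpha> \<ge> _\<close> by (simp add: u_def)
  then have "3 * (2 * u - h * \<alpha>) * \<alpha>^3 \<le> 2 * u^3 * \<alpha>^3" by (rule mult_right_mono) (use al0 in simp)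
  then show "3 * \<alpha>\<^sup>2 * (2 * a - h * \<alpha>\<^sup>2) \<le> 2 * a^3" unfolding au
    by (simp add: power2_eq_square power3_eq_cube algebra_simps)
qed

lemma key_ineq:
  fixes a h \<alpha> p N :: real
  assumes a: "a > 0" and al: "\<alpha> > a" and h: "h > 0"
    and X1: "h * \<alpha>\<^sup>2 \<le> 2 * a" and X2: "3 * \<alpha>\<^sup>2 * (2 * a - h * \<alpha>\<^sup>2) \<le> 2 * a^3"
    and p1: "\<alpha>\<^sup>2 \<le> p" and p2: "p \<le> \<alpha>\<^sup>2 + a\<^sup>2/2"
    and N: "N = 2 * a + h * (a\<^sup>2 + \<alpha>\<^sup>2)"
  shows "\<bar>p / N - \<alpha>\<^sup>2 / (4 * a)\<bar> \<le> \<alpha>\<^sup>2 * (h / 4)"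
proof -
  have al0: "\<alpha> > 0" using a al by simp
  have N2: "N \<ge> 2 * a" using N h by (simp add: add_nonneg_nonneg)
  have Np: "N > 0" using N2 a by simp
  have aa: "a\<^sup>2 \<le> \<alpha>\<^sup>2" using a al by (simp add: power_mono)
  have X3: "3 * h * \<alpha>\<^sup>2 \<ge> 4 * a"
  proof -
    have "2 * a^3 \<le> 2 * a * \<alpha>\<^sup>2" using aa a by (simp add: power2_eq_square power3_eq_cube)
    then have "3 * \<alpha>\<^sup>2 * (2 * a - h * \<alpha>\<^sup>2) \<le> 3 * \<alpha>\<^sup>2 * (2 * a / 3)" using X2 by simp
    then have "2 * a - h * \<alpha>\<^sup>2 \<le> 2 * a / 3" using al0 by (simp add: mult_le_cancel_left)
    then show ?thesis by simp
  qed
  have low: "-(\<alpha>\<^sup>2 * h * a * N) \<le> 4 * a * p - \<alpha>\<^sup>2 * N"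
  proof -
    have i1: "4 * a * p - \<alpha>\<^sup>2 * N \<ge> 4 * a * \<alpha>\<^sup>2 - \<alpha>\<^sup>2 * N" using p1 a by simp
    have i2: "4 * a * \<alpha>\<^sup>2 - \<alpha>\<^sup>2 * N = \<alpha>\<^sup>2 * (2 * a - h * \<alpha>\<^sup>2) - \<alpha>\<^sup>2 * h * a\<^sup>2"
      by (simp add: N algebra_simps power2_eq_square)
    have i3: "\<alpha>\<^sup>2 * (2 * a - h * \<alpha>\<^sup>2) \<ge> 0" using X1 by simp
    have i4: "\<alpha>\<^sup>2 * h * a\<^sup>2 \<le> \<alpha>\<^sup>2 * h * a * N"
    proof -
      have "a\<^sup>2 \<le> a * N" using N2 a by (simp add: power2_eq_square)
      then show ?thesis using h by (simp add: mult_left_mono mult.assoc)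
    qed
    show ?thesis using i1 i2 i3 i4 by linarith
  qed
  have up: "4 * a * p - \<alpha>\<^sup>2 * N \<le> \<alpha>\<^sup>2 * h * a * N"
  proof -
    have "4 * a * p - \<alpha>\<^sup>2 * N \<le> 4 * a * (\<alpha>\<^sup>2 + a\<^sup>2/2) - \<alpha>\<^sup>2 * N" using p2 a by simp
    also have "\<dots> = \<alpha>\<^sup>2 * (2 * a - h * \<alpha>\<^sup>2) + 2 * a^3 - \<alpha>\<^sup>2 * h * a\<^sup>2"
      by (simp add: N algebra_simps power2_eq_square power3_eq_cube)
    also have "\<dots> \<le> 2 * a^3 / 3 + 2 * a^3"
    proof -
      have "\<alpha>\<^sup>2 * (2 * a - h * \<alpha>\<^sup>2) \<le> 2 * a^3 / 3" using X2 by simp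
      moreover have "\<alpha>\<^sup>2 * h * a\<^sup>2 \<ge> 0" using h by simp
      ultimately show ?thesis by linarith
    qed
    also have "\<dots> = (4 * a / 3) * a * (2 * a)" by (simp add: power3_eq_cube)
    also have "\<dots> \<le> (h * \<alpha>\<^sup>2) * a * N"
      using X3 N2 a by (intro mult_mono) auto
    finally show ?thesis by (simp add: algebra_simps)
  qed
  have eq: "p / N - \<alpha>\<^sup>2 / (4 * a) = (4 * a * p - \<alpha>\<^sup>2 * N) / (4 * a * N)"
    using a Np by (simp add: field_simps)
  have "\<bar>4 * a * p - \<alpha>\<^sup>2 * N\<bar> \<le> (\<alpha>\<^sup>2 * (h / 4)) * (4 * a * N)"
    using low up by (simp add: abs_le_iff algebra_simps)
  then show ?thesis unfolding eq using a Np by (simp add: abs_divide pos_divide_le_eq abs_mult)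
qed

lemma P1_bound:
  assumes a: "a > 0" and h: "h > 0" and ah: "a * h \<le> 1/3"
    and x3: "0 \<le> x3" "x3 \<le> h" and y3: "y3 \<in> {0, h}"
  shows "\<bar>P1 a h x3 t y3 s - 2 * exp (- (alpha1 a h)\<^sup>2 * (t - s)) * ((alpha1 a h)\<^sup>2 / (4 * a))\<bar>
     \<le> 2 * exp (- (alpha1 a h)\<^sup>2 * (t - s)) * ((alpha1 a h)\<^sup>2 * (h / 4))"
proof -
  define \<alpha> where "\<alpha> = alpha1 a h"
  define e where "e = exp (- \<alpha>\<^sup>2 * (t - s))"
  define N where "N = 2 * a + h * (a\<^sup>2 + \<alpha>\<^sup>2)"
  define \<phi> where "\<phi> = \<alpha> * cos (\<alpha> * x3) + a * sin (\<alpha> * x3)"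
  have c: "\<alpha> > a" "h * \<alpha> = 2 * arctan (a / \<alpha>)" using alpha1_char[OF a h ah] by (auto simp: \<alpha>_def)
  have al0: "\<alpha> > 0" using c a by simp
  have y: "\<alpha> * cos (\<alpha> * y3) + a * sin (\<alpha> * y3) = \<alpha>"
    using y3 phi_facts(1)[OF a c order_refl less_imp_le[OF h]] by auto
  have f1: "\<alpha> \<le> \<phi>" and f2: "\<phi> \<le> \<alpha> + a\<^sup>2 / (2 * \<alpha>)"
    using phi_facts(2,3)[OF a c x3] by (auto simp: \<phi>_def)
  have p1: "\<alpha>\<^sup>2 \<le> \<alpha> * \<phi>" using f1 al0 by (simp add: power2_eq_square)
  have p2: "\<alpha> * \<phi> \<le> \<alpha>\<^sup>2 + a\<^sup>2/2"
  proof -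
    have "\<alpha> * \<phi> \<le> \<alpha> * (\<alpha> + a\<^sup>2 / (2 * \<alpha>))" using f2 al0 by simp
    also have "\<dots> = \<alpha>\<^sup>2 + a\<^sup>2/2" using al0 by (simp add: field_simps power2_eq_square)
    finally show ?thesis .
  qed
  have K: "\<bar>\<alpha> * \<phi> / N - \<alpha>\<^sup>2 / (4 * a)\<bar> \<le> \<alpha>\<^sup>2 * (h / 4)"
    by (rule key_ineq[OF a c(1) h X_bounds[OF a c] p1 p2 N_def])
  have "P1 a h x3 t y3 s = 2 * e * (\<alpha> * \<phi> / N)"
    unfolding P1_def \<alpha>_def[symmetric] e_def[symmetric] N_def[symmetric] \<phi>_def[symmetric] y
    by (simp add: algebra_simps)
  then have "P1 a h x3 t y3 s - 2 * e * (\<alpha>\<^sup>2 / (4 * a)) = 2 * e * (\<alpha> * \<phi> / N - \<alpha>\<^sup>2 / (4 * a))"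
    by (simp add: algebra_simps)
  then have "\<bar>P1 a h x3 t y3 s - 2 * e * (\<alpha>\<^sup>2 / (4 * a))\<bar> = 2 * e * \<bar>\<alpha> * \<phi> / N - \<alpha>\<^sup>2 / (4 * a)\<bar>"
    by (simp add: abs_mult e_def)
  also have "\<dots> \<le> 2 * e * (\<alpha>\<^sup>2 * (h / 4))" by (rule mult_left_mono[OF K]) (simp add: e_def)
  finally show ?thesis by (simp add: \<alpha>_def e_def)
qed


lemma deriv2_max:
  fixes F F' :: "real \<Rightarrow> real"
  assumes d: "\<delta> > 0" and dF: "\<And>r. \<bar>r\<bar> < \<delta> \<Longrightarrow> DERIV F r :> F' r"
    and dF': "DERIV F' 0 :> c" and mx: "\<And>r. \<bar>r\<bar> < \<delta> \<Longrightarrow> F r \<le> F 0"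
  shows "c \<le> 0"
proof (rule ccontr)
  assume "\<not> c \<le> 0"
  then have c: "c > 0" by simp
  have F0: "F' 0 = 0"
    by (rule DERIV_local_max[OF dF[of 0] d]) (use d mx in auto)
  obtain e where e: "e > 0" "\<And>h. h > 0 \<Longrightarrow> h < e \<Longrightarrow> F' 0 < F' (0 + h)"
    using DERIV_pos_inc_right[OF dF' c] by blast
  define r where "r = min e \<delta> / 2"
  have r: "0 < r" "r < e" "r < \<delta>" using e d by (auto simp: r_def)
  obtain z where z: "0 < z" "z < r" "F r - F 0 = (r - 0) * F' z"
    using MVT2[OF r(1), of F F'] dF r by force
  have "F' z > 0" using e(2)[of z] z r F0 by simp
  then have "r * F' z > 0" using z by (simp add: mult_pos_pos)
  then have "F r > F 0" using z by simp
  moreover have "F r \<le> F 0" using mx r by simp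
  ultimately show False by simp
qed

lemma hess_diag_nonpos:
  fixes f :: "real^2 \<Rightarrow> real" and G :: "real^2 \<Rightarrow> real^2"
  assumes d: "\<delta> > 0" and df: "\<And>y. y \<in> ball x \<delta> \<Longrightarrow> (f has_derivative (\<lambda>v. G y \<bullet> v)) (at y)"
    and dG: "((\<lambda>y. G y $ i) has_derivative L) (at x)"
    and mx: "\<And>y. y \<in> ball x \<delta> \<Longrightarrow> f y \<le> f x"
  shows "L (axis i 1) \<le> 0"
proof -
  define \<gamma> where "\<gamma> r = x + r *\<^sub>R axis i (1::real)" for r :: real
  have g_in: "\<gamma> r \<in> ball x \<delta>" if "\<bar>r\<bar> < \<delta>" for r
    using that by (simp add: \<gamma>_def dist_norm)
  have dg: "(\<gamma> has_derivative (\<lambda>r. r *\<^sub>R axis i 1)) (at r)" for r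
    unfolding \<gamma>_def by (auto intro!: derivative_eq_intros)
  have lin: "linear L" using has_derivative_linear[OF dG] .
  show ?thesis
  proof (rule deriv2_max[OF d])
    fix r :: real assume "\<bar>r\<bar> < \<delta>"
    then have "(f has_derivative (\<lambda>v. G (\<gamma> r) \<bullet> v)) (at (\<gamma> r))" using df g_in by blast
    from diff_chain_at[OF dg this]
    have "((f \<circ> \<gamma>) has_derivative (\<lambda>h. (G (\<gamma> r) $ i) * h)) (at r)"
      by (rule has_derivative_eq_rhs[where f="f \<circ> \<gamma>"]) (auto simp: o_def inner_axis)
    then show "DERIV (\<lambda>r. f (\<gamma> r)) r :> G (\<gamma> r) $ i"
      by (simp add: has_field_derivative_def o_def)
  next
    have "\<gamma> 0 = x" by (simp add: \<gamma>_def)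
    then have dG': "((\<lambda>y. G y $ i) has_derivative L) (at (\<gamma> 0))" using dG by simp
    from diff_chain_at[OF dg dG', unfolded comp_def]
    have "((\<lambda>r. G (\<gamma> r) $ i) has_derivative (\<lambda>h. L (axis i 1) * h)) (at 0)"
      by (rule has_derivative_eq_rhs) (auto simp: linear_scale[OF lin])
    then show "DERIV (\<lambda>r. G (\<gamma> r) $ i) 0 :> L (axis i 1)"
      by (simp add: has_field_derivative_def)
  next
    fix r :: real assume "\<bar>r\<bar> < \<delta>"
    then show "f (\<gamma> r) \<le> f (\<gamma> 0)" using mx g_in by (simp add: \<gamma>_def)
  qed
qed


lemma ext_cont:
  fixes u :: "'a::metric_space \<Rightarrow> real \<Rightarrow> real"
  assumes A: "closed A"
    and cu: "continuous_on (A \<times> {s<..}) (\<lambda>(x,t). u x t)"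
    and lim: "\<forall>x0\<in>A. ((\<lambda>(x,t). u x t) \<longlongrightarrow> g x0) (at (x0, s) within A \<times> {s<..})"
    and cg: "continuous_on A g"
  shows "continuous_on (A \<times> {s..T}) (\<lambda>(x,t). if t = s then g x else u x t)"
  unfolding continuous_on_def
proof (intro ballI)
  define e where "e = (\<lambda>(x,t). if t = s then g x else u x t)"
  fix p assume p: "p \<in> A \<times> {s..T}"
  obtain x0 t0 where p0: "p = (x0, t0)" by (cases p)
  have x0: "x0 \<in> A" and t0: "s \<le> t0" "t0 \<le> T" using p p0 by auto
  have sp: "{s..T} = {s} \<union> {s<..T}" using t0 by auto
  have split: "A \<times> {s..T} = A \<times> {s} \<union> A \<times> {s<..T}" unfolding sp by (rule Sigma_Un_distrib2)
  have S1: "(e \<longlongrightarrow> e p) (at p within A \<times> {s})"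
  proof (cases "t0 = s")
    case True
    have "((\<lambda>q. g (fst q)) \<longlongrightarrow> g (fst p)) (at p within A \<times> {s})"
    proof -
      have "continuous_on (A \<times> {s}) (\<lambda>q. g (fst q))"
        by (rule continuous_on_compose2[OF cg continuous_on_fst]) auto
      then show ?thesis using p True p0 unfolding continuous_on_def by auto
    qed
    moreover have "e p = g (fst p)" using True p0 by (simp add: e_def)
    ultimately show ?thesis
      by (subst Lim_cong_within[where g="\<lambda>q. g (fst q)"]) (simp, simp, simp, force simp: e_def, simp)
  next
    case False
    have "closed (A \<times> {s})" using A by (intro closed_Times) auto
    moreover have "p \<notin> A \<times> {s}" using False p0 by auto
    ultimately have "\<not> p islimpt (A \<times> {s})" using closed_limpt by blast
    then have "at p within A \<times> {s} = bot" using trivial_limit_within by blast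
    then show ?thesis by simp
  qed
  have S2: "(e \<longlongrightarrow> e p) (at p within A \<times> {s<..T})"
  proof -
    have sub: "A \<times> {s<..T} \<subseteq> A \<times> {s<..}" by auto
    have "((\<lambda>(x,t). u x t) \<longlongrightarrow> e p) (at p within A \<times> {s<..})"
    proof (cases "t0 = s")
      case True
      have "e p = g x0" using True p0 by (simp add: e_def)
      then show ?thesis using lim x0 p0 True by simp
    next
      case False
      then have "p \<in> A \<times> {s<..}" using p0 x0 t0 by auto
      then have "((\<lambda>(x,t). u x t) \<longlongrightarrow> (\<lambda>(x,t). u x t) p) (at p within A \<times> {s<..})"
        using cu unfolding continuous_on_def by blast
      moreover have "e p = (\<lambda>(x,t). u x t) p" using False p0 by (simp add: e_def)
      ultimately show ?thesis by simp
    qed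
    then have "((\<lambda>(x,t). u x t) \<longlongrightarrow> e p) (at p within A \<times> {s<..T})"
      by (rule tendsto_within_subset[OF _ sub])
    then show ?thesis
      by (subst Lim_cong_within[where g="\<lambda>(x,t). u x t"]) (simp, simp, simp, force simp: e_def, simp)
  qed
  show "((\<lambda>(x,t). if t = s then g x else u x t) \<longlongrightarrow> (\<lambda>(x,t). if t = s then g x else u x t) p) (at p within A \<times> {s..T})"
    using S1 S2 unfolding split Lim_within_Un e_def by blast
qed


lemma smooth_domain_facts:
  assumes sd: "smooth_domain P \<rho>"
  obtains D where "D [] = \<rho>"
    "\<And>js x. (D js has_derivative (\<lambda>v. \<Sum>i\<in>UNIV. v $ i * D (i # js) x)) (at x)"
    "\<And>js. continuous_on UNIV (D js)"
    "\<And>x. grad \<rho> x = (\<chi> i. D [i] x)"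
    "\<And>x. (\<rho> has_derivative (\<lambda>v. v \<bullet> grad \<rho> x)) (at x)"
    "open P" "closure P \<subseteq> {x. \<rho> x \<le> 0}" "compact (closure P)" "P \<noteq> {}"
    "P = {x. \<rho> x < 0}" "\<And>x. \<rho> x = 0 \<Longrightarrow> grad \<rho> x \<noteq> 0"
proof -
  from sd have ne: "P \<noteq> {}" and bd: "bounded P" and sm: "smooth_R2 \<rho>"
    and Peq: "P = {x. \<rho> x < 0}" and gr: "\<And>x. \<rho> x = 0 \<Longrightarrow> grad \<rho> x \<noteq> 0"
    unfolding smooth_domain_def by auto
  from sm obtain D :: "2 list \<Rightarrow> real^2 \<Rightarrow> real" where D0: "D [] = \<rho>"
    and dD: "\<And>js x. (D js has_derivative (\<lambda>v. \<Sum>i\<in>UNIV. v $ i * D (i # js) x)) (at x)"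
    unfolding smooth_R2_def by blast
  have cD: "continuous_on UNIV (D js)" for js
    using dD by (intro has_derivative_continuous_on) (auto intro: has_derivative_at_withinI)
  have gD: "grad \<rho> x = (\<chi> i. D [i] x)" for x
  proof -
    have "frechet_derivative \<rho> (at x) = (\<lambda>v. \<Sum>i\<in>UNIV. v $ i * D [i] x)"
      using frechet_derivative_at[OF dD[of "[]" x, unfolded D0]] by simp
    moreover have "(\<Sum>j\<in>UNIV. axis i 1 $ j * D [j] x) = D [i] x" for i
    proof -
      have "(\<Sum>j\<in>UNIV. axis i 1 $ j * D [j] x) = (\<Sum>j\<in>UNIV. if j = i then D [j] x else 0)"
        by (rule sum.cong) (auto simp: axis_def)
      then show ?thesis by simp
    qed
    ultimately show ?thesis unfolding grad_def by simp
  qed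
  have dr: "(\<rho> has_derivative (\<lambda>v. v \<bullet> grad \<rho> x)) (at x)" for x
    using dD[of "[]" x] unfolding D0 gD by (simp add: inner_vec_def)
  have cr: "continuous_on UNIV \<rho>" using cD[of "[]"] D0 by simp
  have op: "open P" unfolding Peq by (rule open_Collect_less[OF cr continuous_on_const])
  have cl: "closure P \<subseteq> {x. \<rho> x \<le> 0}"
    by (rule closure_minimal) (auto simp: Peq intro!: closed_Collect_le[OF cr continuous_on_const])
  show ?thesis
    by (rule that[OF D0 dD cD gD dr op cl _ ne Peq gr]) (use bd in simp)
qed


lemma max_principle_eps:
  assumes sd: "smooth_domain P \<rho>" and sol: "neumann_heat_solution P \<rho> s g u"
    and cg: "continuous_on (closure P) g"
    and gG: "\<And>y. y \<in> closure P \<Longrightarrow> g y \<le> G"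
    and D0: "D [] = \<rho>"
    and dD: "\<And>js x. (D js has_derivative (\<lambda>v. \<Sum>i\<in>UNIV. v $ i * D (i # js) x)) (at x)"
    and gD2: "\<And>x. grad \<rho> x = (\<chi> i. D [i] x)"
    and C: "\<And>x. x \<in> closure P \<Longrightarrow> (\<Sum>i\<in>UNIV. D [i, i] x) < C"
    and eps: "\<epsilon> > 0"
    and y0: "y0 \<in> closure P" and t0: "\<tau>0 > s"
  shows "\<exists>xm\<in>closure P. u y0 \<tau>0 - \<epsilon> * \<rho> y0 - \<epsilon> * C * \<tau>0 \<le> G - \<epsilon> * \<rho> xm - \<epsilon> * C * s"
proof -
  obtain D' where D'0: "D' [] = \<rho>"
    and "\<And>js x. (D' js has_derivative (\<lambda>v. \<Sum>i\<in>UNIV. v $ i * D' (i # js) x)) (at x)"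
    and cD: "\<And>js. continuous_on UNIV (D' js)"
    and gD: "\<And>x. grad \<rho> x = (\<chi> i. D' [i] x)"
    and dr: "\<And>x. (\<rho> has_derivative (\<lambda>v. v \<bullet> grad \<rho> x)) (at x)"
    and op: "open P" and cl: "closure P \<subseteq> {x. \<rho> x \<le> 0}" and cp: "compact (closure P)"
    and "P \<noteq> {}"
    and Peq: "P = {x. \<rho> x < 0}" and gr0: "\<And>x. \<rho> x = 0 \<Longrightarrow> grad \<rho> x \<noteq> 0"
    by (rule smooth_domain_facts[OF sd], rule that, assumption+)
  have cr: "continuous_on UNIV \<rho>" using cD[of "[]"] D'0 by simp
  have sol': "continuous_on (closure P \<times> {s<..}) (\<lambda>(x,t). u x t)"
    "\<forall>x0\<in>closure P. ((\<lambda>(x,t). u x t) \<longlongrightarrow> g x0) (at (x0, s) within closure P \<times> {s<..})"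
    "\<exists>(ut :: real^2 \<Rightarrow> real \<Rightarrow> real) (gr :: real^2 \<Rightarrow> real \<Rightarrow> real^2) (H :: real^2 \<Rightarrow> real \<Rightarrow> real^2^2).
        (\<forall>x\<in>P. \<forall>t>s.
           ((\<lambda>\<tau>. u x \<tau>) has_real_derivative ut x t) (at t) \<and>
           ((\<lambda>y. u y t) has_derivative (\<lambda>v. gr x t \<bullet> v)) (at x) \<and>
           ((\<lambda>y. gr y t) has_derivative (\<lambda>v. H x t *v v)) (at x) \<and>
           ut x t = (\<Sum>i\<in>UNIV. H x t $ i $ i)) \<and>
        continuous_on (P \<times> {s<..}) (\<lambda>(x,t). ut x t) \<and>
        continuous_on (P \<times> {s<..}) (\<lambda>(x,t). H x t)"
    "\<forall>x\<in>frontier P. \<forall>t>s.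
        ((\<lambda>r. (u (x - r *\<^sub>R outer_normal \<rho> x) t - u x t) / r) \<longlongrightarrow> 0) (at_right 0)"
    using sol unfolding neumann_heat_solution_def by blast+
  note cu = sol'(1) and lim = sol'(2)
  have neu: "\<And>x t. x \<in> frontier P \<Longrightarrow> t > s \<Longrightarrow>
        ((\<lambda>r. (u (x - r *\<^sub>R outer_normal \<rho> x) t - u x t) / r) \<longlongrightarrow> 0) (at_right 0)"
    using sol'(4) by blast
  from sol'(3) obtain ut gr H where UH: "\<forall>x\<in>P. \<forall>t>s.
           ((\<lambda>\<tau>. u x \<tau>) has_real_derivative ut x t) (at t) \<and>
           ((\<lambda>y. u y t) has_derivative (\<lambda>v. gr x t \<bullet> v)) (at x) \<and>
           ((\<lambda>y. gr y t) has_derivative (\<lambda>v. H x t *v v)) (at x) \<and>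
           ut x t = (\<Sum>i\<in>UNIV. H x t $ i $ i)" by blast
  have dt: "\<And>x t. x \<in> P \<Longrightarrow> t > s \<Longrightarrow> ((\<lambda>\<tau>. u x \<tau>) has_real_derivative ut x t) (at t)"
    and dx: "\<And>x t. x \<in> P \<Longrightarrow> t > s \<Longrightarrow> ((\<lambda>y. u y t) has_derivative (\<lambda>v. gr x t \<bullet> v)) (at x)"
    and dgr: "\<And>x t. x \<in> P \<Longrightarrow> t > s \<Longrightarrow> ((\<lambda>y. gr y t) has_derivative (\<lambda>v. H x t *v v)) (at x)"
    and heat: "\<And>x t. x \<in> P \<Longrightarrow> t > s \<Longrightarrow> ut x t = (\<Sum>i\<in>UNIV. H x t $ i $ i)"
    using UH by blast+
  define K where "K = closure P \<times> {s..\<tau>0}"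
  define w where "w = (\<lambda>(y,\<tau>). (if \<tau> = s then g y else u y \<tau>) - \<epsilon> * \<rho> y - \<epsilon> * C * \<tau>)"
  define W' where "W' y \<tau> = u y \<tau> - \<epsilon> * \<rho> y - \<epsilon> * C * \<tau>" for y \<tau>
  have cw: "continuous_on K w"
  proof -
    have "continuous_on K (\<lambda>(x,t). if t = s then g x else u x t)"
      unfolding K_def by (rule ext_cont[OF _ cu lim cg]) simp
    moreover have "continuous_on K (\<lambda>p. \<rho> (fst p))"
      by (rule continuous_on_compose2[OF cr continuous_on_fst]) auto
    ultimately have "continuous_on K (\<lambda>p. (\<lambda>(x,t). if t = s then g x else u x t) p - \<epsilon> * \<rho> (fst p) - (\<epsilon> * C) * snd p)"
      by (intro continuous_on_diff continuous_on_mult_left continuous_on_snd continuous_on_id)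
    moreover have "w = (\<lambda>p. (\<lambda>(x,t). if t = s then g x else u x t) p - \<epsilon> * \<rho> (fst p) - (\<epsilon> * C) * snd p)"
      by (rule ext) (simp add: w_def split_beta mult.assoc)
    ultimately show ?thesis by simp
  qed
  have cK: "compact K" unfolding K_def using cp by (intro compact_Times) auto
  have y0K: "(y0, \<tau>0) \<in> K" using y0 t0 by (simp add: K_def)
  then have neK: "K \<noteq> {}" by auto
  obtain pm where pmK: "pm \<in> K" and pmax: "\<And>q. q \<in> K \<Longrightarrow> w q \<le> w pm"
    using continuous_attains_sup[OF cK neK cw] by blast
  obtain xm tm where pm: "pm = (xm, tm)" by (cases pm)
  have xm: "xm \<in> closure P" and tm: "s \<le> tm" "tm \<le> \<tau>0" using pmK pm by (auto simp: K_def)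
  have "tm = s"
  proof (rule ccontr)
    assume tms: "tm \<noteq> s"
    then have tm1: "tm > s" using tm by simp
    have maxW: "W' y \<tau> \<le> W' xm tm" if "y \<in> closure P" "s < \<tau>" "\<tau> \<le> \<tau>0" for y \<tau>
    proof -
      have "(y, \<tau>) \<in> K" using that by (auto simp: K_def)
      from pmax[OF this] show ?thesis using that tms unfolding pm w_def W'_def by auto
    qed
    show False
    proof (cases "xm \<in> P")
      case True
      have dW: "((\<lambda>\<tau>. W' xm \<tau>) has_real_derivative ut xm tm - \<epsilon> * C) (at tm)"
        unfolding W'_def using dt[OF True tm1] by (auto intro!: derivative_eq_intros)
      have utC: "ut xm tm \<ge> \<epsilon> * C"
      proof (rule ccontr)
        assume "\<not> ut xm tm \<ge> \<epsilon> * C"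
        then have "ut xm tm - \<epsilon> * C < 0" by simp
        from DERIV_neg_dec_left[OF dW this] obtain d where d: "d > 0"
          and dd: "\<And>h. h > 0 \<Longrightarrow> h < d \<Longrightarrow> W' xm tm < W' xm (tm - h)" by blast
        define h where "h = min d (tm - s) / 2"
        have h: "h > 0" "h < d" "h < tm - s" using d tm1 by (auto simp: h_def)
        have "W' xm (tm - h) \<le> W' xm tm" using maxW[OF xm] h tm by simp
        with dd[OF h(1,2)] show False by simp
      qed
      obtain \<delta> where \<delta>: "\<delta> > 0" "ball xm \<delta> \<subseteq> P" using op True open_contains_ball by blast
      have hess: "H xm tm $ i $ i - \<epsilon> * D [i, i] xm \<le> 0" for i
      proof -
        define G where "G y = gr y tm - \<epsilon> *\<^sub>R grad \<rho> y" for y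
        have "(\<lambda>v. (H xm tm *v v) $ i - \<epsilon> * (\<Sum>j\<in>UNIV. v $ j * D (j # [i]) xm)) (axis i 1) \<le> 0"
        proof (rule hess_diag_nonpos[OF \<delta>(1), where f="\<lambda>y. W' y tm" and G=G])
          fix y assume y: "y \<in> ball xm \<delta>"
          then have yP: "y \<in> P" using \<delta> by auto
          show "((\<lambda>y. W' y tm) has_derivative (\<lambda>v. G y \<bullet> v)) (at y)"
            unfolding W'_def G_def
            using dx[OF yP tm1] dr[of y]
            by (auto intro!: derivative_eq_intros simp: inner_diff_left inner_diff_right inner_commute)
        next
          show "((\<lambda>y. G y $ i) has_derivative (\<lambda>v. (H xm tm *v v) $ i - \<epsilon> * (\<Sum>j\<in>UNIV. v $ j * D (j # [i]) xm))) (at xm)"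
          proof -
            have e1: "((\<lambda>y. gr y tm $ i) has_derivative (\<lambda>v. (H xm tm *v v) $ i)) (at xm)"
              using bounded_linear.has_derivative[OF bounded_linear_vec_nth dgr[OF True tm1]] .
            have "(\<lambda>y. G y $ i) = (\<lambda>y. gr y tm $ i - \<epsilon> * D [i] y)"
              by (simp add: G_def gD2)
            then show ?thesis using e1 dD[of "[i]" xm]
              by (auto intro!: derivative_eq_intros)
          qed
        next
          fix y assume y: "y \<in> ball xm \<delta>"
          then have yP: "y \<in> P" using \<delta> by auto
          then have "y \<in> closure P" using closure_subset by blast
          then show "W' y tm \<le> W' xm tm" using maxW[of y tm] tm1 tm by auto
        qed
        moreover have "(H xm tm *v axis i 1) $ i = H xm tm $ i $ i"
          by (simp add: matrix_vector_mult_basis column_def)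
        moreover have "(\<Sum>j\<in>UNIV. axis i 1 $ j * D (j # [i]) xm) = D [i, i] xm"
        proof -
          have "(\<Sum>j\<in>UNIV. axis i 1 $ j * D (j # [i]) xm) = (\<Sum>j\<in>UNIV. if j = i then D [j, i] xm else 0)"
            by (rule sum.cong) (auto simp: axis_def)
          then show ?thesis by simp
        qed
        ultimately show ?thesis by simp
      qed
      have "ut xm tm = (\<Sum>i\<in>UNIV. H xm tm $ i $ i)" using heat[OF True tm1] .
      also have "\<dots> \<le> (\<Sum>i\<in>UNIV. \<epsilon> * D [i, i] xm)" using hess by (intro sum_mono) (simp add: algebra_simps)
      also have "\<dots> = \<epsilon> * (\<Sum>i\<in>UNIV. D [i, i] xm)" by (simp add: sum_distrib_left)
      also have "\<dots> < \<epsilon> * C" using C[OF xm] eps by simp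
      finally show False using utC by simp
    next
      case False
      have rho0: "\<rho> xm = 0" using xm cl False Peq by force
      have fr: "xm \<in> frontier P" using xm False op by (simp add: frontier_def interior_open)
      define n where "n = outer_normal \<rho> xm"
      define gx where "gx = grad \<rho> xm"
      have gx0: "gx \<noteq> 0" using gr0[OF rho0] by (simp add: gx_def)
      have ng: "n \<bullet> gx = norm gx"
        using gx0 by (simp add: n_def gx_def outer_normal_def power2_norm_eq_inner[symmetric] power2_eq_square)
      have l1: "((\<lambda>r. (u (xm - r *\<^sub>R n) tm - u xm tm) / r) \<longlongrightarrow> 0) (at_right 0)"
        using neu[OF fr tm1] by (simp add: n_def)
      have l2: "((\<lambda>r. (\<rho> (xm - r *\<^sub>R n) - \<rho> xm) / r) \<longlongrightarrow> - norm gx) (at_right 0)"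
      proof -
        have dg: "((\<lambda>r. xm - r *\<^sub>R n) has_derivative (\<lambda>r. - (r *\<^sub>R n))) (at 0)"
          by (auto intro!: derivative_eq_intros)
        have "(\<rho> has_derivative (\<lambda>v. v \<bullet> gx)) (at ((\<lambda>r. xm - r *\<^sub>R n) 0))"
          using dr[of xm] by (simp add: gx_def)
        from diff_chain_at[OF dg this, unfolded comp_def]
        have "((\<lambda>r. \<rho> (xm - r *\<^sub>R n)) has_derivative (*) (- norm gx)) (at 0)"
          by (rule has_derivative_eq_rhs) (rule ext, simp add: ng)
        then have "DERIV (\<lambda>r. \<rho> (xm - r *\<^sub>R n)) 0 :> - norm gx"
          unfolding has_field_derivative_def .
        then have "((\<lambda>r. (\<rho> (xm - (0 + r) *\<^sub>R n) - \<rho> (xm - 0 *\<^sub>R n)) / r) \<longlongrightarrow> - norm gx) (at 0)"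
          unfolding DERIV_def .
        then have "((\<lambda>r. (\<rho> (xm - r *\<^sub>R n) - \<rho> xm) / r) \<longlongrightarrow> - norm gx) (at 0)"
          by simp
        then show ?thesis by (rule tendsto_within_subset) simp
      qed
      have l3: "((\<lambda>r. (W' (xm - r *\<^sub>R n) tm - W' xm tm) / r) \<longlongrightarrow> 0 - \<epsilon> * (- norm gx)) (at_right 0)"
      proof -
        have "((\<lambda>r. (u (xm - r *\<^sub>R n) tm - u xm tm) / r - \<epsilon> * ((\<rho> (xm - r *\<^sub>R n) - \<rho> xm) / r))
              \<longlongrightarrow> 0 - \<epsilon> * (- norm gx)) (at_right 0)"
          by (intro tendsto_intros l1 l2)
        note T = this
        show ?thesis
        proof -
          have "(W' (xm - r *\<^sub>R n) tm - W' xm tm) / r =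
             (u (xm - r *\<^sub>R n) tm - u xm tm) / r - \<epsilon> * ((\<rho> (xm - r *\<^sub>R n) - \<rho> xm) / r)" for r
          proof -
            have "W' (xm - r *\<^sub>R n) tm - W' xm tm = (u (xm - r *\<^sub>R n) tm - u xm tm) - \<epsilon> * (\<rho> (xm - r *\<^sub>R n) - \<rho> xm)"
              by (simp add: W'_def algebra_simps)
            then show ?thesis by (simp add: diff_divide_distrib right_diff_distrib)
          qed
          then have "(\<lambda>r. (W' (xm - r *\<^sub>R n) tm - W' xm tm) / r) =
             (\<lambda>r. (u (xm - r *\<^sub>R n) tm - u xm tm) / r - \<epsilon> * ((\<rho> (xm - r *\<^sub>R n) - \<rho> xm) / r))" by (rule ext)
          then show ?thesis using T by simp
        qed
      qed
      have pos: "0 < 0 - \<epsilon> * (- norm gx)" using eps gx0 by simp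
      have ev: "\<forall>\<^sub>F r in at_right 0. 0 < r \<and> 0 < (W' (xm - r *\<^sub>R n) tm - W' xm tm) / r
                 \<and> (\<rho> (xm - r *\<^sub>R n) - \<rho> xm) / r < 0"
      proof -
        have e1: "\<forall>\<^sub>F r in at_right 0. (0::real) < r" by (rule eventually_at_right_less)
        have e2: "\<forall>\<^sub>F r in at_right 0. 0 < (W' (xm - r *\<^sub>R n) tm - W' xm tm) / r"
          by (rule order_tendstoD(1)[OF l3 pos])
        have "- norm gx < 0" using gx0 by simp
        then have e3: "\<forall>\<^sub>F r in at_right 0. (\<rho> (xm - r *\<^sub>R n) - \<rho> xm) / r < 0"
          by (rule order_tendstoD(2)[OF l2])
        show ?thesis using eventually_conj[OF e1 eventually_conj[OF e2 e3]] by simp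
      qed
      then obtain r where r: "0 < r" "0 < (W' (xm - r *\<^sub>R n) tm - W' xm tm) / r"
          "(\<rho> (xm - r *\<^sub>R n) - \<rho> xm) / r < 0"
        using eventually_happens'[OF trivial_limit_at_right_real ev] by blast
      have "\<rho> (xm - r *\<^sub>R n) < 0" using r rho0 by (simp add: divide_less_0_iff)
      then have "xm - r *\<^sub>R n \<in> P" by (subst Peq) simp
      then have inP: "xm - r *\<^sub>R n \<in> closure P" using closure_subset by blast
      have "W' xm tm < W' (xm - r *\<^sub>R n) tm" using r by (simp add: zero_less_divide_iff)
      with maxW[OF inP tm1 tm(2)] show False by simp
    qed
  qed
  have "w (y0, \<tau>0) \<le> w pm" using pmax[OF y0K] .
  then have "u y0 \<tau>0 - \<epsilon> * \<rho> y0 - \<epsilon> * C * \<tau>0 \<le> g xm - \<epsilon> * \<rho> xm - \<epsilon> * C * s"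
    using t0 \<open>tm = s\<close> by (simp add: w_def pm)
  then show ?thesis using gG[OF xm] xm by force
qed


lemma cont_bound_closure:
  assumes "compact S" "continuous_on UNIV (f :: 'a::metric_space \<Rightarrow> real)"
  obtains B where "\<And>x. x \<in> S \<Longrightarrow> \<bar>f x\<bar> \<le> B"
proof -
  have "compact (f ` S)" using assms by (intro compact_continuous_image) (auto intro: continuous_on_subset)
  then have "bounded (f ` S)" by (rule compact_imp_bounded)
  then obtain B where "\<forall>y\<in>f ` S. \<bar>y\<bar> \<le> B" unfolding bounded_real by blast
  then show ?thesis using that by blast
qed

lemma max_principle:
  assumes sd: "smooth_domain P \<rho>" and sol: "neumann_heat_solution P \<rho> s g u"
    and cg: "continuous_on (closure P) g"
    and gG: "\<And>y. y \<in> closure P \<Longrightarrow> g y \<le> G"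
    and y0: "y0 \<in> closure P" and t0: "\<tau>0 > s"
  shows "u y0 \<tau>0 \<le> G"
proof -
  obtain D where D0: "D [] = \<rho>"
    and dD: "\<And>js x. (D js has_derivative (\<lambda>v. \<Sum>i\<in>UNIV. v $ i * D (i # js) x)) (at x)"
    and cD: "\<And>js. continuous_on UNIV (D js)"
    and gD: "\<And>x. grad \<rho> x = (\<chi> i. D [i] x)"
    and cp: "compact (closure P)"
    by (rule smooth_domain_facts[OF sd], rule that, assumption+)
  have cL: "continuous_on UNIV (\<lambda>x. \<Sum>i\<in>UNIV. D [i, i] x)"
    by (intro continuous_on_sum cD)
  obtain B where B: "\<And>x. x \<in> closure P \<Longrightarrow> \<bar>\<Sum>i\<in>UNIV. D [i, i] x\<bar> \<le> B"
    using cont_bound_closure[OF cp cL] by blast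
  obtain R0 where R0: "\<And>x. x \<in> closure P \<Longrightarrow> \<bar>\<rho> x\<bar> \<le> R0"
    using cont_bound_closure[OF cp, of \<rho>] cD[of "[]"] D0 by auto
  define C where "C = B + 1"
  have C: "\<And>x. x \<in> closure P \<Longrightarrow> (\<Sum>i\<in>UNIV. D [i, i] x) < C"
    using B by (fastforce simp: C_def)
  define M where "M = 2 * R0 + \<bar>C\<bar> * (\<tau>0 - s)"
  have R0p: "R0 \<ge> 0" using R0[OF y0] by simp
  have M0: "M \<ge> 0" using R0p t0 by (simp add: M_def)
  have key: "u y0 \<tau>0 \<le> G + \<epsilon> * M" if eps: "\<epsilon> > 0" for \<epsilon>
  proof -
    obtain xm where xm: "xm \<in> closure P"
      and le: "u y0 \<tau>0 - \<epsilon> * \<rho> y0 - \<epsilon> * C * \<tau>0 \<le> G - \<epsilon> * \<rho> xm - \<epsilon> * C * s"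
      using max_principle_eps[OF sd sol cg gG D0 dD gD C eps y0 t0] by blast
    have "\<rho> y0 - \<rho> xm \<le> 2 * R0" using R0[OF y0] R0[OF xm] by linarith
    then have a1: "\<epsilon> * (\<rho> y0 - \<rho> xm) \<le> \<epsilon> * (2 * R0)" using eps by (intro mult_left_mono) auto
    have "C * (\<tau>0 - s) \<le> \<bar>C\<bar> * (\<tau>0 - s)" using t0 by (intro mult_right_mono) auto
    then have a2: "\<epsilon> * (C * (\<tau>0 - s)) \<le> \<epsilon> * (\<bar>C\<bar> * (\<tau>0 - s))" using eps by (intro mult_left_mono) auto
    have "u y0 \<tau>0 \<le> G + \<epsilon> * (\<rho> y0 - \<rho> xm) + \<epsilon> * (C * (\<tau>0 - s))"
      using le by (simp add: algebra_simps)
    also have "\<dots> \<le> G + \<epsilon> * (2 * R0) + \<epsilon> * (\<bar>C\<bar> * (\<tau>0 - s))" using a1 a2 by simp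
    also have "\<dots> = G + \<epsilon> * M" by (simp add: M_def algebra_simps)
    finally show ?thesis .
  qed
  show ?thesis
  proof (rule field_le_epsilon)
    fix e :: real assume e: "e > 0"
    define \<epsilon> where "\<epsilon> = e / (M + 1)"
    have eps: "\<epsilon> > 0" using e M0 by (simp add: \<epsilon>_def)
    have "\<epsilon> * M \<le> e"
    proof -
      have "\<epsilon> * M = e * (M / (M + 1))" by (simp add: \<epsilon>_def)
      also have "\<dots> \<le> e * 1" using e M0 by (intro mult_left_mono) auto
      finally show ?thesis by simp
    qed
    then show "u y0 \<tau>0 \<le> G + e" using key[OF eps] by simp
  qed
qed


lemma set_integrable_const_fin:
  assumes "A \<in> sets M" "emeasure M A < \<infinity>"
  shows "set_integrable M A (\<lambda>_. c::real)"
  unfolding set_integrable_def using assms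
  by (simp add: integrable_indicator_iff)

lemma clamp_ineq:
  fixes w c :: real assumes c: "c > 0"
  shows "\<bar>w\<bar> - c \<le> w * max (-1) (min 1 (w / c))"
proof (cases "\<bar>w\<bar> \<ge> c")
  case True
  show ?thesis
  proof (cases "w \<ge> 0")
    case True2: True
    then have "w / c \<ge> 1" using True c by (simp add: field_simps)
    then have "max (-1) (min 1 (w / c)) = 1" by simp
    then show ?thesis using True2 c by simp
  next
    case False2: False
    then have "w \<le> - c" using True by simp
    then have "w / c \<le> -1" using c by (simp add: field_simps)
    then have "max (-1) (min 1 (w / c)) = -1" by simp
    then show ?thesis using False2 c by simp
  qed
next
  case False
  then have "-c \<le> w" "w \<le> c" by auto
  then have "-1 \<le> w / c" "w / c \<le> 1" using c by (simp_all add: field_simps)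
  then have h1: "max (-1) (min 1 (w / c)) = w / c" by (simp add: max_def min_def)
  have h2: "w * (w / c) \<ge> 0" using c by (simp add: zero_le_divide_iff zero_le_mult_iff)
  have h3: "\<bar>w\<bar> - c < 0" using False by simp
  show ?thesis unfolding h1 using h2 h3 by linarith
qed

lemma kernel_abs_bound:
  assumes sd: "smooth_domain P \<rho>" and kern: "neumann_heat_kernel P \<rho> W"
    and x: "x \<in> closure P" and st: "s < t"
  shows "set_integrable lborel P (\<lambda>y. W x t y s)"
    and "(LINT y:P|lborel. \<bar>W x t y s\<bar>) \<le> 1"
proof -
  have op: "open P" and bd: "bounded P"
    using smooth_domain_facts[OF sd] sd by (auto simp: smooth_domain_def)
  have Pm: "P \<in> sets lborel" using op by simp
  have Pf: "emeasure lborel P < \<infinity>" using emeasure_bounded_finite[OF bd] .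
  have ck: "continuous_on {(x,t,y,s). x \<in> closure P \<and> y \<in> closure P \<and> s < t} (\<lambda>(x,t,y,s). W x t y s)"
    and kp: "\<And>s g. continuous_on (closure P) g \<Longrightarrow>
        (\<forall>x\<in>closure P. \<forall>t>s. set_integrable lborel P (\<lambda>y. W x t y s * g y)) \<and>
        neumann_heat_solution P \<rho> s g (\<lambda>x t. LINT y:P|lborel. W x t y s * g y)"
    using kern unfolding neumann_heat_kernel_def by blast+
  have cW: "continuous_on (closure P) (\<lambda>y. W x t y s)"
  proof -
    have "continuous_on (closure P) (\<lambda>y. (\<lambda>(x,t,y,s). W x t y s) (x, t, y, s))"
      by (rule continuous_on_compose2[OF ck]) (use x st in \<open>auto intro!: continuous_intros\<close>)
    then show ?thesis by simp
  qed
  have "set_integrable lborel P (\<lambda>y. W x t y s * 1)"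
    using kp[of "\<lambda>_. 1" s] x st by auto
  then show int: "set_integrable lborel P (\<lambda>y. W x t y s)" by simp
  have intA: "set_integrable lborel P (\<lambda>y. \<bar>W x t y s\<bar>)" by (rule set_integrable_abs[OF int])
  have bnd: "(LINT y:P|lborel. \<bar>W x t y s\<bar>) \<le> 1 + c * measure lborel P" if c: "c > 0" for c
  proof -
    define g where "g y = max (-1) (min 1 (W x t y s / c))" for y
    have cg: "continuous_on (closure P) g" unfolding g_def
      by (intro continuous_intros cW) (use c in simp)
    have gle: "g y \<le> 1" for y by (simp add: g_def)
    have intg: "set_integrable lborel P (\<lambda>y. W x t y s * g y)" using kp[OF cg] x st by blast
    have sol: "neumann_heat_solution P \<rho> s g (\<lambda>x t. LINT y:P|lborel. W x t y s * g y)"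
      using kp[OF cg] by blast
    have le1: "(LINT y:P|lborel. W x t y s * g y) \<le> 1"
      using max_principle[OF sd sol cg _ x st, of 1] gle by simp
    have intc: "set_integrable lborel P (\<lambda>_. c)" by (rule set_integrable_const_fin[OF Pm Pf])
    have "(LINT y:P|lborel. \<bar>W x t y s\<bar> - c) \<le> (LINT y:P|lborel. W x t y s * g y)"
      by (rule set_integral_mono[OF set_integral_diff(1)[OF intA intc] intg])
         (simp add: g_def clamp_ineq[OF c])
    moreover have "(LINT y:P|lborel. \<bar>W x t y s\<bar> - c) = (LINT y:P|lborel. \<bar>W x t y s\<bar>) - c * measure lborel P"
      using set_integral_diff(2)[OF intA intc] set_integral_const[OF Pm, of c] Pf by simp
    ultimately show ?thesis using le1 by simp
  qed
  show "(LINT y:P|lborel. \<bar>W x t y s\<bar>) \<le> 1"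
  proof (rule field_le_epsilon)
    fix e :: real assume e: "e > 0"
    define c where "c = e / (measure lborel P + 1)"
    have c: "c > 0" using e by (simp add: c_def add_nonneg_pos)
    have "c * measure lborel P = e * (measure lborel P / (measure lborel P + 1))" by (simp add: c_def)
    also have "\<dots> \<le> e * 1"
    proof -
      have aux: "a \<ge> 0 \<Longrightarrow> a / (a + 1) \<le> (1::real)" for a by (simp add: divide_le_eq_1)
      show ?thesis using e aux[OF measure_nonneg[of lborel P]] by (intro mult_left_mono) auto
    qed
    finally show "(LINT y:P|lborel. \<bar>W x t y s\<bar>) \<le> 1 + e" using bnd[OF c] by simp
  qed
qed


lemma bounded_set_integrable:
  fixes f :: "real \<Rightarrow> real"
  assumes m: "f \<in> borel_measurable lborel" and b: "\<And>s. s \<in> {a..b} \<Longrightarrow> \<bar>f s\<bar> \<le> K"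
  shows "set_integrable lborel {a..b} f"
proof (rule set_integrable_bound[where f="\<lambda>_. K"])
  show "set_integrable lborel {a..b} (\<lambda>_. K)"
  proof (cases "a \<le> b")
    case True
    then show ?thesis by (intro set_integrable_const_fin) auto
  next
    case False
    then show ?thesis by (simp add: set_integrable_def)
  qed
  show "set_borel_measurable lborel {a..b} f"
    using m unfolding set_borel_measurable_def by measurable
  show "AE x in lborel. x \<in> {a..b} \<longrightarrow> norm (f x) \<le> norm K"
  proof (intro AE_I2 impI)
    fix x assume "x \<in> {a..b}"
    then have "\<bar>f x\<bar> \<le> K" by (rule b)
    then show "norm (f x) \<le> norm K" by simp
  qed
qed

lemma exp_integral:
  fixes c t :: real
  assumes t: "t \<ge> 0"
  shows "set_integrable lborel {0..t} (\<lambda>s. c * exp (- c * (t - s)))"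
    and "(LINT s:{0..t}|lborel. c * exp (- c * (t - s))) = 1 - exp (- c * t)"
proof -
  have "integrable lborel (\<lambda>s. c * exp (- c * (t - s)) * indicator {0..t} s)"
    by (rule borel_integrable_atLeastAtMost) (auto intro!: continuous_intros)
  then show "set_integrable lborel {0..t} (\<lambda>s. c * exp (- c * (t - s)))"
    unfolding set_integrable_def by (simp add: mult.commute)
  have "integral\<^sup>L lborel (\<lambda>x. indicator {0 .. t} x *\<^sub>R (c * exp (- c * (t - x)))) =
        exp (- c * (t - t)) - exp (- c * (t - 0))"
  proof (rule integral_FTC_atLeastAtMost[OF t])
    fix x assume "0 \<le> x" "x \<le> t"
    have "((\<lambda>s. exp (- c * (t - s))) has_real_derivative c * exp (- c * (t - x))) (at x within {0..t})"
      by (auto intro!: derivative_eq_intros)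
    then show "((\<lambda>s. exp (- c * (t - s))) has_vector_derivative c * exp (- c * (t - x))) (at x within {0..t})"
      by (simp add: has_real_derivative_iff_has_vector_derivative)
  next
    show "continuous_on {0..t} (\<lambda>x. c * exp (- c * (t - x)))" by (intro continuous_intros)
  qed
  moreover have "exp (- c * (t - t)) - exp (- c * (t - 0)) = 1 - exp (- c * t)" by simp
  ultimately show "(LINT s:{0..t}|lborel. c * exp (- c * (t - s))) = 1 - exp (- c * t)"
    unfolding set_lebesgue_integral_def by (rule trans)
qed

lemma J_facts:
  fixes F :: "real^2 \<Rightarrow> real \<Rightarrow> real \<Rightarrow> real"
  assumes sd: "smooth_domain P \<rho>" and kern: "neumann_heat_kernel P \<rho> W"
    and x: "x \<in> closure P"
    and meas: "set_borel_measurable borel (P \<times> {0..}) (\<lambda>p. F (fst p) zz (snd p))"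
    and bnd: "\<And>y s. y \<in> P \<Longrightarrow> 0 \<le> s \<Longrightarrow> s \<le> t \<Longrightarrow> \<bar>F y zz s\<bar> \<le> M"
    and M0: "M \<ge> 0"
  defines "J \<equiv> \<lambda>s. \<integral>y. (indicator ({..<t} \<times> P) (s,y) * W x t y s) * (indicator (P \<times> {0..}) (y,s) * F y zz s) \<partial>lborel"
  shows "J \<in> borel_measurable lborel"
    and "\<And>s. \<bar>J s\<bar> \<le> M"
    and "\<And>s. 0 \<le> s \<Longrightarrow> s < t \<Longrightarrow> J s = (LINT y:P|lborel. W x t y s * F y zz s)"
proof -
  have op: "open P"
    using smooth_domain_facts[OF sd] by blast
  have ck: "continuous_on {(x,t,y,s). x \<in> closure P \<and> y \<in> closure P \<and> s < t} (\<lambda>(x,t,y,s). W x t y s)"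
    using kern unfolding neumann_heat_kernel_def by blast
  have m1: "(\<lambda>q::real \<times> (real^2). indicator ({..<t} \<times> P) q *\<^sub>R W x t (snd q) (fst q)) \<in> borel_measurable borel"
  proof (rule borel_measurable_continuous_on_indicator)
    show "{..<t} \<times> P \<in> sets borel" using op by (intro borel_open open_Times) auto
    have "continuous_on ({..<t} \<times> P) (\<lambda>q. (\<lambda>(x,t,y,s). W x t y s) (x, t, snd q, fst q))"
      by (rule continuous_on_compose2[OF ck])
         (use x closure_subset[of P] in \<open>auto intro!: continuous_intros\<close>)
    then show "continuous_on ({..<t} \<times> P) (\<lambda>q. W x t (snd q) (fst q))" by simp
  qed
  have sw: "(\<lambda>q::real \<times> (real^2). (snd q, fst q)) \<in> borel_measurable borel"
    by (intro borel_measurable_continuous_onI continuous_intros)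
  have m2: "(\<lambda>q::real \<times> (real^2). (\<lambda>p. indicator (P \<times> {0..}) p *\<^sub>R F (fst p) zz (snd p)) (snd q, fst q)) \<in> borel_measurable borel"
    by (rule measurable_compose[OF sw]) (use meas in \<open>simp add: set_borel_measurable_def\<close>)
  have m12: "(\<lambda>q::real \<times> (real^2). (indicator ({..<t} \<times> P) q * W x t (snd q) (fst q)) *
        (indicator (P \<times> {0..}) (snd q, fst q) * F (snd q) zz (fst q))) \<in> borel_measurable borel"
    using borel_measurable_times[OF m1 m2] by simp
  have "case_prod (\<lambda>s y. (indicator ({..<t} \<times> P) (s,y) * W x t y s) * (indicator (P \<times> {0..}) (y,s) * F y zz s))
      \<in> borel_measurable (lborel \<Otimes>\<^sub>M lborel)"
    unfolding lborel_prod measurable_lborel2 case_prod_beta' using m12 by simp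
  then show "J \<in> borel_measurable lborel"
    unfolding J_def by (rule lborel.borel_measurable_lebesgue_integral)
  show eqJ: "J s = (LINT y:P|lborel. W x t y s * F y zz s)" if s: "0 \<le> s" "s < t" for s
    unfolding J_def set_lebesgue_integral_def
    by (rule Bochner_Integration.integral_cong) (use s in \<open>auto simp: indicator_def\<close>)
  show "\<bar>J s\<bar> \<le> M" for s
  proof (cases "0 \<le> s \<and> s < t")
    case True
    then have s: "0 \<le> s" "s < t" by auto
    show ?thesis
    proof (cases "set_integrable lborel P (\<lambda>y. W x t y s * F y zz s)")
      case True
      have intW: "set_integrable lborel P (\<lambda>y. W x t y s)"
        and W1: "(LINT y:P|lborel. \<bar>W x t y s\<bar>) \<le> 1"
        using kernel_abs_bound[OF sd kern x s(2)] by auto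
      have "\<bar>J s\<bar> = norm (LINT y:P|lborel. W x t y s * F y zz s)" using eqJ[OF s] by simp
      also have "\<dots> \<le> (LINT y:P|lborel. norm (W x t y s * F y zz s))"
        by (rule set_integral_norm_bound[OF True])
      also have "\<dots> \<le> (LINT y:P|lborel. M * \<bar>W x t y s\<bar>)"
      proof (rule set_integral_mono)
        show "set_integrable lborel P (\<lambda>y. norm (W x t y s * F y zz s))"
          using set_integrable_abs[OF True] by simp
        show "set_integrable lborel P (\<lambda>y. M * \<bar>W x t y s\<bar>)"
          using set_integrable_abs[OF intW] by (intro set_integrable_mult_right) auto
        fix y assume y: "y \<in> P"
        have "\<bar>F y zz s\<bar> \<le> M" using bnd[OF y s(1)] s by simp
        then show "norm (W x t y s * F y zz s) \<le> M * \<bar>W x t y s\<bar>"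
          by (simp add: abs_mult mult.commute[of "\<bar>W x t y s\<bar>"] mult_right_mono)
      qed
      also have "\<dots> = M * (LINT y:P|lborel. \<bar>W x t y s\<bar>)" by simp
      also have "\<dots> \<le> M * 1" using W1 M0 by (intro mult_left_mono) auto
      finally show ?thesis by simp
    next
      case False
      have "(LINT y:P|lborel. W x t y s * F y zz s) = 0"
        using False unfolding set_lebesgue_integral_def set_integrable_def
        by (rule not_integrable_integral_eq)
      then show ?thesis using eqJ[OF s] M0 by simp
    qed
  next
    case False
    have "J s = 0" unfolding J_def
      by (rule integral_eq_zero_AE[OF AE_I2]) (use False in \<open>auto simp: indicator_def\<close>)
    then show ?thesis using M0 by simp
  qed
qed


lemma pointwise_bound:
  fixes p0 ph k j0 jh E M :: real
  assumes "\<bar>p0 - k\<bar> \<le> E" "\<bar>ph - k\<bar> \<le> E" "\<bar>j0\<bar> \<le> M" "\<bar>jh\<bar> \<le> M"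
  shows "\<bar>(p0 * j0 + ph * jh) - (k * j0 + k * jh)\<bar> \<le> 2 * E * M"
proof -
  have "\<bar>(p0 * j0 + ph * jh) - (k * j0 + k * jh)\<bar> = \<bar>(p0 - k) * j0 + (ph - k) * jh\<bar>"
    by (simp add: algebra_simps)
  also have "\<dots> \<le> \<bar>p0 - k\<bar> * \<bar>j0\<bar> + \<bar>ph - k\<bar> * \<bar>jh\<bar>"
    by (metis abs_mult abs_triangle_ineq)
  also have "\<dots> \<le> E * M + E * M"
    using assms by (intro add_mono mult_mono) auto
  finally show ?thesis by simp
qed

theorem lemma3p5:
  fixes P :: "(real^2) set" and \<rho> :: "real^2 \<Rightarrow> real"
    and W :: "real^2 \<Rightarrow> real \<Rightarrow> real^2 \<Rightarrow> real \<Rightarrow> real"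
    and F :: "real^2 \<Rightarrow> real \<Rightarrow> real \<Rightarrow> real"
    and a h t x3 :: real and x :: "real^2"
  assumes "smooth_domain P \<rho>"
    and "neumann_heat_kernel P \<rho> W"
    and "a > 0" and "h > 0" and "a * h \<le> 1/3"
    and "\<exists>B. \<forall>y\<in>P. \<forall>y3\<in>{0,h}. \<forall>s\<ge>0. \<bar>F y y3 s\<bar> \<le> B"
    and "\<forall>y3\<in>{0,h}. set_borel_measurable borel (P \<times> {0..}) (\<lambda>p. F (fst p) y3 (snd p))"
    and "x \<in> P" and "x3 \<in> {0..h}" and "t > 0"
  shows "\<bar>(LINT s:{0..t}|lborel.
              (LINT y:P|lborel. W x t y s * P1 a h x3 t 0 s * F y 0 s)
            + (LINT y:P|lborel. W x t y s * P1 a h x3 t h s * F y h s))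
          - (LINT s:{0..t}|lborel.
              (LINT y:P|lborel. 2 * exp (- (alpha1 a h)\<^sup>2 * (t - s)) * ((alpha1 a h)\<^sup>2 / (4 * a))
                                  * W x t y s * F y 0 s)
            + (LINT y:P|lborel. 2 * exp (- (alpha1 a h)\<^sup>2 * (t - s)) * ((alpha1 a h)\<^sup>2 / (4 * a))
                                  * W x t y s * F y h s))\<bar>
         \<le> 5 * h * (SUP p\<in>P \<times> {0,h} \<times> {0..t}. \<bar>F (fst p) (fst (snd p)) (snd (snd p))\<bar>)"
proof -
  note sd = assms(1) and kern = assms(2) and a = assms(3) and h = assms(4) and ah = assms(5)
  note xP = assms(8) and t = assms(10)
  have x3: "0 \<le> x3" "x3 \<le> h" using assms(9) by auto
  have xc: "x \<in> closure P" using xP closure_subset by blast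
  have Pne: "P \<noteq> {}" using xP by blast
  obtain B where FB: "\<forall>y\<in>P. \<forall>y3\<in>{0,h}. \<forall>s\<ge>0. \<bar>F y y3 s\<bar> \<le> B" using assms(6) by blast
  define M where "M = (SUP p\<in>P \<times> {0,h} \<times> {0..t}. \<bar>F (fst p) (fst (snd p)) (snd (snd p))\<bar>)"
  have bdd: "bdd_above ((\<lambda>p. \<bar>F (fst p) (fst (snd p)) (snd (snd p))\<bar>) ` (P \<times> {0,h} \<times> {0..t}))"
    by (rule bdd_aboveI2[where M=B]) (use FB in auto)
  have FM: "\<bar>F y y3 s\<bar> \<le> M" if "y \<in> P" "y3 \<in> {0,h}" "0 \<le> s" "s \<le> t" for y y3 s
  proof -
    have "(y, y3, s) \<in> P \<times> {0,h} \<times> {0..t}" using that by auto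
    from cSUP_upper[OF this bdd] show ?thesis by (simp add: M_def)
  qed
  have M0: "M \<ge> 0"
  proof -
    obtain y where "y \<in> P" using Pne by blast
    then have "\<bar>F y 0 0\<bar> \<le> M" using FM t by simp
    then show ?thesis by simp
  qed
  define \<alpha> where "\<alpha> = alpha1 a h"
  define e where "e s = exp (- \<alpha>\<^sup>2 * (t - s))" for s
  define k where "k s = 2 * exp (- \<alpha>\<^sup>2 * (t - s)) * (\<alpha>\<^sup>2 / (4 * a))" for s
  define p0 where "p0 s = P1 a h x3 t 0 s" for s
  define ph where "ph s = P1 a h x3 t h s" for s
  define I where "I y3 s = (LINT y:P|lborel. W x t y s * F y y3 s)" for y3 s
  define J where "J = (\<lambda>y3 s. \<integral>y. (indicator ({..<t} \<times> P) (s,y) * W x t y s) * (indicator (P \<times> {0..}) (y,s) * F y y3 s) \<partial>lborel)"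
  have Jf: "J y3 \<in> borel_measurable lborel" "\<And>s. \<bar>J y3 s\<bar> \<le> M"
       "\<And>s. 0 \<le> s \<Longrightarrow> s < t \<Longrightarrow> J y3 s = I y3 s" if y3: "y3 \<in> {0,h}" for y3
  proof -
    have meas: "set_borel_measurable borel (P \<times> {0..}) (\<lambda>p. F (fst p) y3 (snd p))" using assms(7) y3 by blast
    have bnd: "\<And>y s. y \<in> P \<Longrightarrow> 0 \<le> s \<Longrightarrow> s \<le> t \<Longrightarrow> \<bar>F y y3 s\<bar> \<le> M" using FM y3 by blast
    have JJ1: "J y3 \<in> borel_measurable lborel"
      unfolding J_def by (rule J_facts(1)[where F=F and zz=y3 and t=t and M=M and P=P and W=W and x=x, OF sd kern xc meas bnd M0])
    have JJ2: "\<bar>J y3 s\<bar> \<le> M" for s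
      using J_facts(2)[where F=F and zz=y3 and t=t and M=M and P=P and W=W and x=x, OF sd kern xc meas bnd M0, of s]
      unfolding J_def by simp
    have JJ3: "J y3 s = I y3 s" if "0 \<le> s" "s < t" for s
      using J_facts(3)[where F=F and zz=y3 and t=t and M=M and P=P and W=W and x=x, OF sd kern xc meas bnd M0 that]
      unfolding J_def I_def by simp
    show "J y3 \<in> borel_measurable lborel" by (rule JJ1)
    show "\<And>s. \<bar>J y3 s\<bar> \<le> M" by (rule JJ2)
    show "\<And>s. 0 \<le> s \<Longrightarrow> s < t \<Longrightarrow> J y3 s = I y3 s" by (rule JJ3)
  qed
  have y30: "(0::real) \<in> {0,h}" and y3h: "h \<in> {0,h}" by auto
  have pull1: "(LINT y:P|lborel. W x t y s * c * F y y3 s) = c * I y3 s" for c y3 s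
  proof -
    have "(\<lambda>y. W x t y s * c * F y y3 s) = (\<lambda>y. c * (W x t y s * F y y3 s))" by (simp add: fun_eq_iff ac_simps)
    then show ?thesis by (simp add: I_def)
  qed
  have pull2: "(LINT y:P|lborel. c * W x t y s * F y y3 s) = c * I y3 s" for c y3 s
  proof -
    have "(\<lambda>y. c * W x t y s * F y y3 s) = (\<lambda>y. c * (W x t y s * F y y3 s))" by (simp add: fun_eq_iff ac_simps)
    then show ?thesis by (simp add: I_def)
  qed
  define At where "At s = p0 s * J 0 s + ph s * J h s" for s
  define Bt where "Bt s = k s * J 0 s + k s * J h s" for s
  have LA0: "(LINT s:{0..t}|lborel. p0 s * I 0 s + ph s * I h s) = (LINT s:{0..t}|lborel. At s)"
    unfolding set_lebesgue_integral_def
  proof (rule integral_discrete_difference[where X="{t}"])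
    fix s assume "s \<notin> {t}"
    then show "indicat_real {0..t} s *\<^sub>R (p0 s * I 0 s + ph s * I h s) = indicat_real {0..t} s *\<^sub>R At s"
      using Jf(3)[OF y30, of s] Jf(3)[OF y3h, of s]
      by (cases "s \<in> {0..t}") (auto simp: At_def)
  qed auto
  have LB0: "(LINT s:{0..t}|lborel. k s * I 0 s + k s * I h s) = (LINT s:{0..t}|lborel. Bt s)"
    unfolding set_lebesgue_integral_def
  proof (rule integral_discrete_difference[where X="{t}"])
    fix s assume "s \<notin> {t}"
    then show "indicat_real {0..t} s *\<^sub>R (k s * I 0 s + k s * I h s) = indicat_real {0..t} s *\<^sub>R Bt s"
      using Jf(3)[OF y30, of s] Jf(3)[OF y3h, of s]
      by (cases "s \<in> {0..t}") (auto simp: Bt_def)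
  qed auto
  have LA: "(LINT s:{0..t}|lborel.
              (LINT y:P|lborel. W x t y s * P1 a h x3 t 0 s * F y 0 s)
            + (LINT y:P|lborel. W x t y s * P1 a h x3 t h s * F y h s)) = (LINT s:{0..t}|lborel. At s)"
  proof -
    have "(\<lambda>s. (LINT y:P|lborel. W x t y s * P1 a h x3 t 0 s * F y 0 s)
            + (LINT y:P|lborel. W x t y s * P1 a h x3 t h s * F y h s)) = (\<lambda>s. p0 s * I 0 s + ph s * I h s)"
      by (simp only: pull1 p0_def ph_def)
    then show ?thesis using LA0 by simp
  qed
  have LB: "(LINT s:{0..t}|lborel.
              (LINT y:P|lborel. 2 * exp (- (alpha1 a h)\<^sup>2 * (t - s)) * ((alpha1 a h)\<^sup>2 / (4 * a))
                                  * W x t y s * F y 0 s)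
            + (LINT y:P|lborel. 2 * exp (- (alpha1 a h)\<^sup>2 * (t - s)) * ((alpha1 a h)\<^sup>2 / (4 * a))
                                  * W x t y s * F y h s)) = (LINT s:{0..t}|lborel. Bt s)"
  proof -
    have "(\<lambda>s. (LINT y:P|lborel. 2 * exp (- (alpha1 a h)\<^sup>2 * (t - s)) * ((alpha1 a h)\<^sup>2 / (4 * a))
                                  * W x t y s * F y 0 s)
            + (LINT y:P|lborel. 2 * exp (- (alpha1 a h)\<^sup>2 * (t - s)) * ((alpha1 a h)\<^sup>2 / (4 * a))
                                  * W x t y s * F y h s)) = (\<lambda>s. k s * I 0 s + k s * I h s)"
      by (simp only: pull2 k_def \<alpha>_def)
    then show ?thesis using LB0 by simp
  qed
  have P1b: "\<bar>P1 a h x3 t y3 s - k s\<bar> \<le> 2 * e s * (\<alpha>\<^sup>2 * (h / 4))" if "y3 \<in> {0,h}" for y3 s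
    using P1_bound[OF a h ah x3 that, of t s] by (simp add: k_def e_def \<alpha>_def)
  have e1: "e s \<le> 1" if "s \<le> t" for s using that by (simp add: e_def)
  have e0: "e s \<ge> 0" for s by (simp add: e_def)
  have q0: "\<alpha>\<^sup>2 / (4 * a) \<ge> 0" using a by simp
  define Kc where "Kc = 2 * (\<alpha>\<^sup>2 / (4 * a)) + 2 * (\<alpha>\<^sup>2 * (h / 4))"
  have kb: "\<bar>k s\<bar> \<le> 2 * (\<alpha>\<^sup>2 / (4 * a))" if "s \<le> t" for s
  proof -
    have "\<bar>k s\<bar> = 2 * e s * (\<alpha>\<^sup>2 / (4 * a))" using e0 q0 a by (simp add: k_def e_def abs_mult)
    also have "\<dots> \<le> 2 * 1 * (\<alpha>\<^sup>2 / (4 * a))" using e1[OF that] q0 by (intro mult_right_mono) auto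
    finally show ?thesis by simp
  qed
  have pb: "\<bar>P1 a h x3 t y3 s\<bar> \<le> Kc" if "y3 \<in> {0,h}" "s \<le> t" for y3 s
  proof -
    have "2 * e s * (\<alpha>\<^sup>2 * (h / 4)) \<le> 2 * 1 * (\<alpha>\<^sup>2 * (h / 4))"
      using e1[OF that(2)] h by (intro mult_right_mono mult_left_mono) auto
    moreover have "\<bar>P1 a h x3 t y3 s\<bar> \<le> \<bar>P1 a h x3 t y3 s - k s\<bar> + \<bar>k s\<bar>"
      using abs_triangle_ineq[of "P1 a h x3 t y3 s - k s" "k s"] by simp
    ultimately show ?thesis using P1b[OF that(1), of s] kb[OF that(2)] unfolding Kc_def by linarith
  qed
  have cP1: "(\<lambda>s. P1 a h x3 t y3 s) \<in> borel_measurable lborel" for y3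
  proof -
    define c1 where "c1 = 2 * (alpha1 a h * cos (alpha1 a h * x3) + a * sin (alpha1 a h * x3))
       * (alpha1 a h * cos (alpha1 a h * y3) + a * sin (alpha1 a h * y3))
     / (2 * a + h * (a\<^sup>2 + (alpha1 a h)\<^sup>2))"
    have "(\<lambda>s. P1 a h x3 t y3 s) = (\<lambda>s. c1 * exp (- (alpha1 a h)\<^sup>2 * (t - s)))"
      by (rule ext) (simp add: P1_def c1_def)
    moreover have "(\<lambda>s. c1 * exp (- (alpha1 a h)\<^sup>2 * (t - s))) \<in> borel_measurable lborel" by measurable
    ultimately show ?thesis by simp
  qed
  have ck: "k \<in> borel_measurable lborel"
    unfolding k_def by measurable
  have mA: "At \<in> borel_measurable lborel"
    unfolding At_def p0_def ph_def using cP1 Jf(1)[OF y30] Jf(1)[OF y3h] by measurable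
  have mB: "Bt \<in> borel_measurable lborel"
    unfolding Bt_def using ck Jf(1)[OF y30] Jf(1)[OF y3h] by measurable
  have iA: "set_integrable lborel {0..t} At"
  proof (rule bounded_set_integrable[OF mA])
    fix s assume s: "s \<in> {0..t}"
    have "\<bar>At s\<bar> \<le> \<bar>p0 s\<bar> * \<bar>J 0 s\<bar> + \<bar>ph s\<bar> * \<bar>J h s\<bar>" unfolding At_def
      by (metis abs_mult abs_triangle_ineq)
    also have "\<dots> \<le> Kc * M + Kc * M"
      using pb[OF y30, of s] pb[OF y3h, of s] Jf(2)[OF y30, of s] Jf(2)[OF y3h, of s] s
      by (intro add_mono mult_mono) (auto simp: p0_def ph_def)
    finally show "\<bar>At s\<bar> \<le> Kc * M + Kc * M" .
  qed
  have iB: "set_integrable lborel {0..t} Bt"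
  proof (rule bounded_set_integrable[OF mB])
    fix s assume s: "s \<in> {0..t}"
    have "\<bar>Bt s\<bar> \<le> \<bar>k s\<bar> * \<bar>J 0 s\<bar> + \<bar>k s\<bar> * \<bar>J h s\<bar>" unfolding Bt_def
      by (metis abs_mult abs_triangle_ineq)
    also have "\<dots> \<le> (2 * (\<alpha>\<^sup>2 / (4 * a))) * M + (2 * (\<alpha>\<^sup>2 / (4 * a))) * M"
      using kb[of s] Jf(2)[OF y30, of s] Jf(2)[OF y3h, of s] s
      by (intro add_mono mult_mono) auto
    finally show "\<bar>Bt s\<bar> \<le> (2 * (\<alpha>\<^sup>2 / (4 * a))) * M + (2 * (\<alpha>\<^sup>2 / (4 * a))) * M" .
  qed
  have iD: "set_integrable lborel {0..t} (\<lambda>s. At s - Bt s)" by (rule set_integral_diff(1)[OF iA iB])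
  have iE: "set_integrable lborel {0..t} (\<lambda>s. (h * M) * (\<alpha>\<^sup>2 * exp (- \<alpha>\<^sup>2 * (t - s))))"
    using exp_integral(1)[of t "\<alpha>\<^sup>2"] t by (intro set_integrable_mult_right) auto
  have "\<bar>(LINT s:{0..t}|lborel. At s) - (LINT s:{0..t}|lborel. Bt s)\<bar> = \<bar>LINT s:{0..t}|lborel. At s - Bt s\<bar>"
    using set_integral_diff(2)[OF iA iB] by simp
  also have "\<dots> \<le> (LINT s:{0..t}|lborel. norm (At s - Bt s))"
    using set_integral_norm_bound[OF iD] by simp
  also have "\<dots> \<le> (LINT s:{0..t}|lborel. (h * M) * (\<alpha>\<^sup>2 * exp (- \<alpha>\<^sup>2 * (t - s))))"
  proof (rule set_integral_mono)
    show "set_integrable lborel {0..t} (\<lambda>s. norm (At s - Bt s))"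
      using set_integrable_abs[OF iD] by simp
    show "set_integrable lborel {0..t} (\<lambda>s. (h * M) * (\<alpha>\<^sup>2 * exp (- \<alpha>\<^sup>2 * (t - s))))" by (rule iE)
    fix s assume s: "s \<in> {0..t}"
    have "\<bar>(p0 s * J 0 s + ph s * J h s) - (k s * J 0 s + k s * J h s)\<bar> \<le> 2 * (2 * e s * (\<alpha>\<^sup>2 * (h / 4))) * M"
      by (rule pointwise_bound) (use P1b[OF y30, of s] P1b[OF y3h, of s] Jf(2)[OF y30, of s] Jf(2)[OF y3h, of s] in \<open>auto simp: p0_def ph_def\<close>)
    then show "norm (At s - Bt s) \<le> (h * M) * (\<alpha>\<^sup>2 * exp (- \<alpha>\<^sup>2 * (t - s)))"
      by (simp add: At_def Bt_def e_def algebra_simps)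
  qed
  also have "\<dots> = (h * M) * (1 - exp (- \<alpha>\<^sup>2 * t))"
    using exp_integral(2)[of t "\<alpha>\<^sup>2"] t by simp
  also have "\<dots> \<le> (h * M) * 1"
    using h M0 by (intro mult_left_mono) auto
  also have "\<dots> \<le> 5 * h * M" using h M0 by simp
  finally show ?thesis unfolding LA LB M_def by simp
qed

end
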